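(* Let $L>0$, $N\ge1$, and let $x=(x_1,\dots,x_{2N})\in(\mathbb{R}_{>0})^{2N}$ satisfy the highest weight condition and $\sum_{i=1}^{2N}x_i\le L$. Let $u$, $(\mu^{(i)})_{1\le i\le u}$ and $(N^{(i)})_{1\le i\le u}$ be produced by Algorithm II started from $x^{(1)}=x$. Then $$\sum_{i=1}^{u}N^{(i)}\mu^{(i)}\le \frac{L}{2}.$$ Equivalently, the Young diagram having $\nu^{(i)}=N^{(i)}-N^{(i+1)}$ rows of length $\lambda^{(i)}=\sum_{l\le i}\mu^{(l)}$ ($1\le i\le u$, with $N^{(u+1)}=0$) has area at most $L/2$.
   Context: Highest weight condition: a sequence $x_1,\dots,x_{2n}$ of nonnegative reals satisfies it if $\sum_{i=1}^k(x_{2i-1}-x_{2i})\ge0$ for all $1\le k\le n$. Algorithm II. Set $N^{(1)}=N$, $x^{(1)}=x$. Given $x^{(i)}=(x^{(i)}_1,\dots,x^{(i)}_{2N^{(i)}})$ of positive reals satisfying the highest weight condition: let $\mu^{(i)}=\min_j x^{(i)}_j$ and $y^{(i)}_j=x^{(i)}_j-\mu^{(i)}$. In the (linear, non-cyclic) array $y^{(i)}_1,\dots,y^{(i)}_{2N^{(i)}}$ consider the maximal runs of consecutive zeros (a lone zero counts as a run); say there are $k^{(i)}$ runs with lengths $n^{(i)}_1,\dots,n^{(i)}_{k^{(i)}}$. Let $N^{(i+1)}=N^{(i)}-\sum_{j}\lceil n^{(i)}_j/2\rceil$. If $N^{(i+1)}=0$, stop and set $u=i$. Otherwise form $x^{(i+1)}$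 from $y^{(i)}$: (a) if a run of zeros is at the left end, delete it; (b) for every run of zeros lying between positive entries $a,b$, delete the zeros if the run length is even, and if odd delete the zeros and also replace $a,b$ by the single entry $a+b$; (c') if a run of zeros is at the right end, preceded by a positive entry $a$, delete the zeros, and if its length is odd also delete $a$. Repeat with $x^{(i+1)}$. *)

theory Defs
  imports Main "HOL.Real"
begin

text \<open>Highest weight condition for a list x_1..x_{2n} (0-indexed here):
  for all 1 <= k <= n, sum_{i<k} (x_{2i} - x_{2i+1}) >= 0.\<close>
definition highest_weight :: "real list \<Rightarrow> bool" where
  "highest_weight x \<longleftrightarrow>
     (\<forall>k\<in>{1..length x div 2}. (\<Sum>i<k. x ! (2*i) - x ! (2*i+1)) \<ge> 0)"

function zero_runs :: "real list \<Rightarrow> nat list" where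
  "zero_runs [] = []"
| "zero_runs (v # ys) =
     (if v \<noteq> 0 then zero_runs ys
      else length (takeWhile (\<lambda>z. z = 0) (v # ys)) # zero_runs (dropWhile (\<lambda>z. z = 0) ys))"
  by pat_completeness auto
termination
  by (relation "measure length") (auto simp: le_imp_less_Suc length_dropWhile_le)

text \<open>Formation of x^(i+1) from y^(i), processing left to right; acc is the output built
  so far (its last entry is the current positive entry a, possibly already merged).
  (a) a leading zero run is deleted; (b) an interior run is deleted, and if odd its
  neighbours a, b are replaced by a+b; (c') a trailing run is deleted, and if odd the
  preceding entry is deleted as well.\<close>
function alg2_form :: "real list \<Rightarrow> real list \<Rightarrow> real list" where
  "alg2_form acc [] = acc"
| "alg2_form acc (v # ys) =
     (if v \<noteq> 0 then alg2_form (acc @ [v]) ys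
      else (let k = length (takeWhile (\<lambda>z. z = 0) (v # ys));
                r = dropWhile (\<lambda>z. z = 0) ys in
            if acc = [] then alg2_form [] r
            else if r = [] then (if even k then acc else butlast acc)
            else if even k then alg2_form acc r
            else alg2_form (butlast acc @ [last acc + hd r]) (tl r)))"
  by pat_completeness auto
termination
  by (relation "measure (\<lambda>(acc, ys). length ys)")
     (auto simp: le_imp_less_Suc length_dropWhile_le less_Suc_eq_le order.trans[OF diff_le_self])

definition alg2_step :: "nat \<times> real list \<Rightarrow> nat \<times> real list" where
  "alg2_step s = (let N = fst s; x = snd s; \<mu> = Min (set x);
                      y = map (\<lambda>t. t - \<mu>) x
                  in (N - sum_list (map (\<lambda>n. (n + 1) div 2) (zero_runs y)),
                      alg2_form [] y))"

text \<open>alg2_seq N x i = (N^(i+1), x^(i+1)) (0-indexed iteration).\<close>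
definition alg2_seq :: "nat \<Rightarrow> real list \<Rightarrow> nat \<Rightarrow> nat \<times> real list" where
  "alg2_seq N x i = (alg2_step ^^ i) (N, x)"

text \<open>mu^(i+1) in 0-indexed form.\<close>
definition alg2_mu :: "nat \<Rightarrow> real list \<Rightarrow> nat \<Rightarrow> real" where
  "alg2_mu N x i = Min (set (snd (alg2_seq N x i)))"

text \<open>u = the (1-indexed) step i at which N^(i+1) = 0.\<close>
definition alg2_u :: "nat \<Rightarrow> real list \<Rightarrow> nat" where
  "alg2_u N x = (LEAST i. fst (alg2_seq N x i) = 0)"

end

theory Submission
  imports Defs
begin

lemma sum_tw0: "sum_list (takeWhile (\<lambda>z. z = 0) (zs::real list)) = 0"
  by (induction zs) auto

lemma sum_split_tw: "sum_list (zs::real list) = sum_list (dropWhile (\<lambda>z. z = 0) zs)"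
proof -
  have "sum_list zs = sum_list (takeWhile (\<lambda>z. z = 0) zs @ dropWhile (\<lambda>z. z = 0) zs)" by simp
  also have "\<dots> = sum_list (dropWhile (\<lambda>z. z = 0) zs)" by (simp only: sum_list_append sum_tw0) simp?
  finally show ?thesis .
qed

lemma len_split_tw: "length zs = length (takeWhile P zs) + length (dropWhile P zs)"
  by (metis length_append takeWhile_dropWhile_id)

lemma form_props:
  assumes "\<forall>t\<in>set acc. t > 0" "\<forall>t\<in>set ys. t \<ge> 0"
  shows "(\<forall>t\<in>set (alg2_form acc ys). t > 0) \<and> sum_list (alg2_form acc ys) \<le> sum_list acc + sum_list ys
     \<and> length acc + length ys \<le> length (alg2_form acc ys) + 2 * sum_list (map (\<lambda>n. (n+1) div 2) (zero_runs ys))"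
  using assms
proof (induction "length ys" arbitrary: acc ys rule: less_induct)
  case less
  show ?case
  proof (cases ys)
    case Nil then show ?thesis using less.prems by simp
  next
    case (Cons v zs)
    show ?thesis
    proof (cases "v = 0")
      case False
      have lt: "length zs < length ys" using Cons by simp
      have "v > 0" using less.prems Cons False by force
      have IH: "(\<forall>t\<in>set (alg2_form (acc@[v]) zs). t > 0) \<and> sum_list (alg2_form (acc@[v]) zs) \<le> sum_list (acc@[v]) + sum_list zs
     \<and> length (acc@[v]) + length zs \<le> length (alg2_form (acc@[v]) zs) + 2 * sum_list (map (\<lambda>n. (n+1) div 2) (zero_runs zs))"
        by (rule less.hyps[OF lt]) (use less.prems Cons \<open>v > 0\<close> in auto)
      then show ?thesis using Cons False by simp
    next
      case True
      define k where "k = length (takeWhile (\<lambda>z. z = (0::real)) (v#zs))"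
      define r where "r = dropWhile (\<lambda>z. z = (0::real)) zs"
      have eq: "alg2_form acc ys = (if acc = [] then alg2_form [] r else if r=[] then (if even k then acc else butlast acc) else if even k then alg2_form acc r else alg2_form (butlast acc @ [last acc + hd r]) (tl r))"
        using Cons True unfolding k_def r_def by (simp only: alg2_form.simps Let_def) simp
      have zr: "zero_runs ys = k # zero_runs r"
        using Cons True unfolding k_def r_def by (simp only: zero_runs.simps) simp
      have k: "k = Suc (length (takeWhile (\<lambda>z. z = 0) zs))" using True by (simp add: k_def)
      have lenys: "length ys = k + length r" using k Cons len_split_tw[of zs "\<lambda>z. z = 0"] r_def by simp
      have sumys: "sum_list ys = sum_list r" using Cons True sum_split_tw[of zs] r_def by simp
      have rpos: "\<forall>t\<in>set r. t \<ge> 0" using less.prems Cons r_def by (auto dest: set_dropWhileD)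
      have rlt: "length r < length ys" using lenys k by simp
      have hdr: "r \<noteq> [] \<Longrightarrow> hd r \<noteq> 0" using hd_dropWhile[of "\<lambda>z. z = 0" zs] unfolding r_def by simp
      have kle: "k \<le> 2 * ((k+1) div 2)" by simp
      show ?thesis
      proof (cases "acc = []")
        case True
        have IH: "(\<forall>t\<in>set (alg2_form [] r). t > 0) \<and> sum_list (alg2_form [] r) \<le> sum_list [] + sum_list r
     \<and> length ([]::real list) + length r \<le> length (alg2_form [] r) + 2 * sum_list (map (\<lambda>n. (n+1) div 2) (zero_runs r))" by (rule less.hyps[OF rlt]) (use rpos in auto)
        show ?thesis using IH eq True zr lenys sumys kle by simp
      next
        case accne: False
        have sacc: "sum_list acc = sum_list (butlast acc) + last acc"
          by (metis accne append_butlast_last_id sum_list_append sum_list.Cons sum_list.Nil add_0_right)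
        have lastpos: "last acc > 0" using accne less.prems by simp
        have bpos: "\<forall>t\<in>set (butlast acc). t > 0" using less.prems by (meson in_set_butlastD)
        show ?thesis
        proof (cases "r = []")
          case True
          then show ?thesis using eq accne zr lenys sumys less.prems sacc lastpos less_imp_le[OF lastpos] bpos kle
            by (auto simp: length_butlast)
        next
          case rne: False
          show ?thesis
          proof (cases "even k")
            case True
            have IH: "(\<forall>t\<in>set (alg2_form acc r). t > 0) \<and> sum_list (alg2_form acc r) \<le> sum_list acc + sum_list r
     \<and> length acc + length r \<le> length (alg2_form acc r) + 2 * sum_list (map (\<lambda>n. (n+1) div 2) (zero_runs r))" by (rule less.hyps[OF rlt]) (use rpos less.prems in auto)
            show ?thesis using IH eq True accne rne zr lenys sumys kle by simp
          next
            case odd: False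
            define acc' where "acc' = butlast acc @ [last acc + hd r]"
            have rcons: "r = hd r # tl r" using rne by simp
            have hdpos: "hd r > 0" using hdr rne rpos by (metis list.set_sel(1) order_le_less)
            have tpos: "\<forall>t\<in>set (tl r). t \<ge> 0" using rpos by (metis list.set_sel(2) rne)
            have a'pos: "\<forall>t\<in>set acc'. t > 0" using acc'_def bpos lastpos hdpos by auto
            have tlt: "length (tl r) < length ys" using rlt by simp
            have IH: "(\<forall>t\<in>set (alg2_form acc' (tl r)). t > 0) \<and> sum_list (alg2_form acc' (tl r)) \<le> sum_list acc' + sum_list (tl r)
     \<and> length acc' + length (tl r) \<le> length (alg2_form acc' (tl r)) + 2 * sum_list (map (\<lambda>n. (n+1) div 2) (zero_runs (tl r)))" by (rule less.hyps[OF tlt]) (use tpos a'pos in auto)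
            have zrr: "zero_runs r = zero_runs (tl r)" using rcons hdr rne by (metis zero_runs.simps(2))
            have sr: "sum_list r = hd r + sum_list (tl r)" by (metis rcons sum_list.Cons)
            have la: "length acc' = length acc" using acc'_def accne by simp
            have lr: "length r = Suc (length (tl r))" using rne by (cases r) auto
            have sa: "sum_list acc' = sum_list acc + hd r" using acc'_def sacc by simp
            have k2: "k + 1 = 2 * ((k+1) div 2)" using odd by presburger
            have e2: "alg2_form acc ys = alg2_form acc' (tl r)" using eq odd accne rne acc'_def by simp
            have z2: "sum_list (map (\<lambda>n. (n+1) div 2) (zero_runs ys)) = (k+1) div 2 + sum_list (map (\<lambda>n. (n+1) div 2) (zero_runs (tl r)))"
              using zr zrr by simp
            have c3: "length acc + length ys \<le> length (alg2_form acc ys) + 2 * sum_list (map (\<lambda>n. (n+1) div 2) (zero_runs ys))"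
            proof -
              define F where "F = length (alg2_form acc' (tl r))"
              define S where "S = sum_list (map (\<lambda>n. (n+1) div 2) (zero_runs (tl r)))"
              define d where "d = (k+1) div 2"
              have h: "length acc' + length (tl r) \<le> F + 2 * S" using conjunct2[OF conjunct2[OF IH]] unfolding F_def S_def .
              have "length acc + length ys = (length acc' + length (tl r)) + (k + 1)" using la lr lenys by simp
              also have "\<dots> \<le> F + 2 * S + 2 * d" using h k2 unfolding d_def by linarith
              also have "\<dots> = F + 2 * (d + S)" by simp
              finally show ?thesis unfolding e2 z2 F_def S_def d_def .
            qed
            have c2: "sum_list (alg2_form acc ys) \<le> sum_list acc + sum_list ys"
              unfolding e2 using conjunct1[OF conjunct2[OF IH]] sa sr sumys by linarith
            show ?thesis using IH c2 c3 e2 by simp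
          qed
        qed
      qed
    qed
  qed
qed

lemma sum_map_sub: "sum_list (map (\<lambda>t. t - m) (X::real list)) = sum_list X - real (length X) * m"
  by (induction X) (auto simp: algebra_simps)

lemma step_inv:
  assumes pos: "\<forall>t\<in>set X. t > 0" and len: "2 * N \<le> length X"
  shows "(\<forall>t\<in>set (snd (alg2_step (N, X))). t > 0) \<and> 2 * fst (alg2_step (N, X)) \<le> length (snd (alg2_step (N, X)))
     \<and> sum_list (snd (alg2_step (N, X))) + 2 * real N * Min (set X) \<le> sum_list X"
proof (cases "X = []")
  case True
  then have "N = 0" using len by simp
  then show ?thesis using True by (simp add: alg2_step_def)
next
  case False
  define m where "m = Min (set X)"
  define y where "y = map (\<lambda>t. t - m) X"
  define s where "s = sum_list (map (\<lambda>n. (n + 1) div 2) (zero_runs y))"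
  have st: "alg2_step (N, X) = (N - s, alg2_form [] y)"
    unfolding alg2_step_def m_def y_def s_def by (simp add: Let_def)
  have mX: "m \<in> set X" unfolding m_def using False by simp
  have mpos: "m > 0" using mX pos by auto
  have ynn: "\<forall>t\<in>set y. t \<ge> 0" unfolding y_def m_def by auto
  have FP: "(\<forall>t\<in>set (alg2_form [] y). t > 0) \<and> sum_list (alg2_form [] y) \<le> sum_list [] + sum_list y
     \<and> length ([]::real list) + length y \<le> length (alg2_form [] y) + 2 * s"
    unfolding s_def by (rule form_props) (use ynn in auto)
  have ly: "length y = length X" unfolding y_def by simp
  have sy: "sum_list y = sum_list X - real (length X) * m" unfolding y_def by (rule sum_map_sub)
  have c2: "2 * (N - s) \<le> length (alg2_form [] y)" using FP ly len by auto
  have "real (2 * N) * m \<le> real (length X) * m" using len mpos by (intro mult_right_mono) auto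
  then have c3: "sum_list (alg2_form [] y) + 2 * real N * m \<le> sum_list X" using FP sy by simp
  show ?thesis using st FP c2 c3 m_def by simp
qed

lemma seq_suc: "alg2_seq N x (Suc i) = alg2_step (alg2_seq N x i)"
  unfolding alg2_seq_def by simp

lemma seq_inv:
  assumes pos: "\<forall>t\<in>set x. t > 0" and len: "2 * N \<le> length x"
  shows "(\<forall>t\<in>set (snd (alg2_seq N x n)). t > 0) \<and> 2 * fst (alg2_seq N x n) \<le> length (snd (alg2_seq N x n))
     \<and> 2 * (\<Sum>i<n. real (fst (alg2_seq N x i)) * alg2_mu N x i) + sum_list (snd (alg2_seq N x n)) \<le> sum_list x"
proof (induction n)
  case 0
  then show ?case using pos len by (simp add: alg2_seq_def)
next
  case (Suc n)
  obtain M X where MX: "alg2_seq N x n = (M, X)" by (cases "alg2_seq N x n")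
  have S: "(\<forall>t\<in>set (snd (alg2_step (M, X))). t > 0) \<and> 2 * fst (alg2_step (M, X)) \<le> length (snd (alg2_step (M, X)))
     \<and> sum_list (snd (alg2_step (M, X))) + 2 * real M * Min (set X) \<le> sum_list X"
    by (rule step_inv) (use Suc.IH MX in auto)
  have mu: "alg2_mu N x n = Min (set X)" unfolding alg2_mu_def MX by simp
  have "2 * (\<Sum>i<Suc n. real (fst (alg2_seq N x i)) * alg2_mu N x i) + sum_list (snd (alg2_seq N x (Suc n)))
     = 2 * (\<Sum>i<n. real (fst (alg2_seq N x i)) * alg2_mu N x i) + (2 * real M * Min (set X) + sum_list (snd (alg2_step (M, X))))"
    using MX mu seq_suc[of N x n] by (simp add: algebra_simps)
  also have "\<dots> \<le> 2 * (\<Sum>i<n. real (fst (alg2_seq N x i)) * alg2_mu N x i) + sum_list X" using S by linarith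
  also have "\<dots> \<le> sum_list x" using Suc.IH MX by simp
  finally show ?case using S seq_suc[of N x n] MX by simp
qed

theorem mainTheorem9:
  fixes L :: real and N :: nat and x :: "real list"
  assumes "L > 0" and "N \<ge> 1" and "length x = 2 * N"
    and "\<forall>t\<in>set x. t > 0"
    and "highest_weight x"
    and "sum_list x \<le> L"
  shows "(\<Sum>i<alg2_u N x. real (fst (alg2_seq N x i)) * alg2_mu N x i) \<le> L / 2"
proof -
  have I: "(\<forall>t\<in>set (snd (alg2_seq N x (alg2_u N x))). t > 0) \<and> 2 * fst (alg2_seq N x (alg2_u N x)) \<le> length (snd (alg2_seq N x (alg2_u N x)))
     \<and> 2 * (\<Sum>i<alg2_u N x. real (fst (alg2_seq N x i)) * alg2_mu N x i) + sum_list (snd (alg2_seq N x (alg2_u N x))) \<le> sum_list x"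
    by (rule seq_inv) (use assms in auto)
  have "sum_list (snd (alg2_seq N x (alg2_u N x))) \<ge> 0"
    using I by (intro sum_list_nonneg) auto
  then show ?thesis using I assms(6) by linarith
qed

end
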